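(* Consider a Markov decision process with states $\mathcal S$, actions $\mathcal A$, transition kernel $\mathcal P$, nonnegative cost bounded above by $\overline{c_\pi}$, starting distribution $\rho$, discount factor $\gamma\in(0,1)$ and policy $\pi$, with $c_\pi(s)=\mathbb E_{a\sim\pi}\mathcal C(s,a)$ and $\mathcal P_\pi(s'\mid s)=\int_{\mathcal A}\pi(a\mid s)\mathcal P(s'\mid s,a)\,\mathrm da$. Let $\mathcal L_\pi(s)=\mathbb E_\pi[\sum_{t=0}^\infty\gamma^t c_\pi(s_t)\mid s_0=s]$ and, for constants $k,\lambda$, $\Delta\mathcal L_\pi(s)=\mathbb E_{s'\sim\mathcal P_\pi(\cdot\mid s)}\mathcal L_\pi(s')-\mathcal L_\pi(s)+k\big[\mathcal L_\pi(s)-\lambda\,\mathbb E_{s'\sim\mathcal P_\pi(\cdot\mid s)}\mathcal L_\pi(s')\big]$. Let $\mathcal U^T_\pi=\frac1T\sum_{t=0}^T\mathcal T(s\mid\rho,\pi,t)$. Suppose $M$ trajectories of length $T$ are sampled, and let $s^m_t$ denote the state of the $m$-th trajectory at timestep $t$. Then for every $\alpha>0$, $$\mathbb P\Big(\Big|\frac1{MT}\sum_{m=1}^M\sum_{t=1}^T\Delta\mathcal L_\pi(s^m_t)-\mathbb E_{s\sim\mathcal U^T_\pi}\Delta\mathcal L_\pi(s)\Big|\ge\alpha\Big)\le 2\exp\Big(-\frac{M\alpha^2(1-\gamma)^2}{((1-k\lambda)^2+(k-1)^2)\,\overline{c_\pi}^2}\Big).$$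
   Context: The state distribution is defined by $\mathcal T(s\mid\rho,\pi,0)=\rho$ and $\mathcal T(s'\mid\rho,\pi,t+1)=\int_{\mathcal S}\int_{\mathcal A}\pi(a\mid s)\mathcal P(s'\mid s,a)\,\mathrm da\,\mathcal T(s\mid\rho,\pi,t)\,\mathrm ds$. Trajectories start from $s_0\sim\rho$ and evolve under $\pi$ and $\mathcal P$. $\overline{c_\pi}$ denotes the maximum of the cost. *)

theory Defs
  imports "HOL-Probability.Probability"
begin

definition Ppi :: "('a \<Rightarrow> 'b measure) \<Rightarrow> ('a \<Rightarrow> 'b \<Rightarrow> 'a measure) \<Rightarrow> 'a \<Rightarrow> 'a measure" where
  "Ppi pol P s = pol s \<bind> (\<lambda>a. P s a)"

definition cpi :: "('a \<Rightarrow> 'b measure) \<Rightarrow> ('a \<Rightarrow> 'b \<Rightarrow> real) \<Rightarrow> 'a \<Rightarrow> real" where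
  "cpi pol C s = (\<integral>a. C s a \<partial>(pol s))"

fun state_dist :: "'a measure \<Rightarrow> ('a \<Rightarrow> 'b measure) \<Rightarrow> ('a \<Rightarrow> 'b \<Rightarrow> 'a measure) \<Rightarrow> nat \<Rightarrow> 'a measure" where
  "state_dist rho pol P 0 = rho"
| "state_dist rho pol P (Suc t) = state_dist rho pol P t \<bind> Ppi pol P"

text \<open>Value function L_pi(s) = E_pi[sum_t gamma^t c_pi(s_t) | s_0 = s]
  = sum_t gamma^t E_{s_t ~ T(.|delta_s,pol,t)} c_pi(s_t).\<close>
definition Lpi :: "'a measure \<Rightarrow> ('a \<Rightarrow> 'b measure) \<Rightarrow> ('a \<Rightarrow> 'b \<Rightarrow> 'a measure) \<Rightarrow> ('a \<Rightarrow> 'b \<Rightarrow> real)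
    \<Rightarrow> real \<Rightarrow> 'a \<Rightarrow> real" where
  "Lpi S pol P C \<gamma> s = (\<Sum>t. \<gamma> ^ t * (\<integral>s'. cpi pol C s' \<partial>(state_dist (return S s) pol P t)))"

definition DeltaL :: "'a measure \<Rightarrow> ('a \<Rightarrow> 'b measure) \<Rightarrow> ('a \<Rightarrow> 'b \<Rightarrow> 'a measure) \<Rightarrow> ('a \<Rightarrow> 'b \<Rightarrow> real)
    \<Rightarrow> real \<Rightarrow> real \<Rightarrow> real \<Rightarrow> 'a \<Rightarrow> real" where
  "DeltaL S pol P C \<gamma> k lam s =
     (\<integral>s'. Lpi S pol P C \<gamma> s' \<partial>(Ppi pol P s)) - Lpi S pol P C \<gamma> s
     + k * (Lpi S pol P C \<gamma> s - lam * (\<integral>s'. Lpi S pol P C \<gamma> s' \<partial>(Ppi pol P s)))"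

text \<open>Law of one trajectory (s_0, ..., s_n): s_0 ~ rho, s_{t+1} ~ P_pi(. | s_t),
  as a measure on functions {0..n} -> S.\<close>
fun traj :: "'a measure \<Rightarrow> 'a measure \<Rightarrow> ('a \<Rightarrow> 'b measure) \<Rightarrow> ('a \<Rightarrow> 'b \<Rightarrow> 'a measure) \<Rightarrow> nat
    \<Rightarrow> (nat \<Rightarrow> 'a) measure" where
  "traj S rho pol P 0 = distr rho (PiM {0} (\<lambda>_. S)) (\<lambda>s. restrict (\<lambda>_. s) {0})"
| "traj S rho pol P (Suc n) = traj S rho pol P n \<bind>
     (\<lambda>\<omega>. distr (Ppi pol P (\<omega> n)) (PiM {0..Suc n} (\<lambda>_. S)) (\<lambda>s. fun_upd \<omega> (Suc n) s))"

definition trajs :: "'a measure \<Rightarrow> 'a measure \<Rightarrow> ('a \<Rightarrow> 'b measure) \<Rightarrow> ('a \<Rightarrow> 'b \<Rightarrow> 'a measure) \<Rightarrow> nat \<Rightarrow> nat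
    \<Rightarrow> (nat \<Rightarrow> nat \<Rightarrow> 'a) measure" where
  "trajs S rho pol P M T = PiM {1..M} (\<lambda>_. traj S rho pol P T)"

end

theory Submission
  imports Defs
begin


lemma Ppi_kernel:
  assumes "pol \<in> S \<rightarrow>\<^sub>M prob_algebra A" "(\<lambda>(s, a). P s a) \<in> S \<Otimes>\<^sub>M A \<rightarrow>\<^sub>M prob_algebra S"
  shows "Ppi pol P \<in> S \<rightarrow>\<^sub>M prob_algebra S"
proof -
  have "(\<lambda>s. pol s \<bind> (\<lambda>a. P s a)) \<in> S \<rightarrow>\<^sub>M prob_algebra S"
    by (rule measurable_bind_prob_space2[OF assms])
  then show ?thesis unfolding Ppi_def[abs_def] .
qed

lemma bind_in_prob_algebra:
  assumes "N \<in> space (prob_algebra X)" "K \<in> X \<rightarrow>\<^sub>M prob_algebra Y"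
  shows "N \<bind> K \<in> space (prob_algebra Y)"
  using measurable_bind_prob_space[OF measurable_const, OF assms, THEN measurable_space, of undefined "count_space UNIV"]
  by simp

lemma state_dist_space:
  assumes "rho \<in> space (prob_algebra S)" "Ppi pol P \<in> S \<rightarrow>\<^sub>M prob_algebra S"
  shows "state_dist rho pol P t \<in> space (prob_algebra S)"
  by (induction t) (auto intro: bind_in_prob_algebra assms)

lemma state_dist_kernel:
  assumes "Ppi pol P \<in> S \<rightarrow>\<^sub>M prob_algebra S"
  shows "(\<lambda>s. state_dist (return S s) pol P t) \<in> S \<rightarrow>\<^sub>M prob_algebra S"
proof (induction t)
  case 0 then show ?case by simp
next
  case (Suc t)
  then show ?case by (simp add: measurable_bind_prob_space assms)
qed

lemma integral_bounds_prob:
  fixes f :: "_ \<Rightarrow> real"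
  assumes "N \<in> space (prob_algebra X)" "f \<in> borel_measurable X"
    "\<And>x. x \<in> space X \<Longrightarrow> lo \<le> f x" "\<And>x. x \<in> space X \<Longrightarrow> f x \<le> hi"
  shows "lo \<le> (\<integral>x. f x \<partial>N) \<and> (\<integral>x. f x \<partial>N) \<le> hi"
proof -
  have N: "prob_space N" "sets N = sets X" using assms(1) by (auto simp: space_prob_algebra)
  have sp: "space N = space X" using sets_eq_imp_space_eq[OF N(2)] .
  have fm: "f \<in> borel_measurable N" using assms(2) measurable_cong_sets[OF N(2) refl] by blast
  have int: "integrable N f"
    apply (rule finite_measure.integrable_const_bound[where B="max \<bar>lo\<bar> \<bar>hi\<bar>"])
      using N(1) prob_space_def apply blast
     apply (rule AE_I2) using assms(3,4) sp apply (fastforce simp: abs_le_iff)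
    by (rule fm)
  show ?thesis
    using prob_space.integral_ge_const[OF N(1) int, of lo] prob_space.integral_le_const[OF N(1) int, of hi]
      assms(3,4) sp by (auto intro!: AE_I2)
qed

lemma cpi_meas_bounds:
  assumes pk: "pol \<in> S \<rightarrow>\<^sub>M prob_algebra A"
    and C_meas: "(\<lambda>(s, a). C s a) \<in> borel_measurable (S \<Otimes>\<^sub>M A)"
    and C_nonneg: "\<And>s a. s \<in> space S \<Longrightarrow> a \<in> space A \<Longrightarrow> 0 \<le> C s a"
    and C_bound: "\<And>s a. s \<in> space S \<Longrightarrow> a \<in> space A \<Longrightarrow> C s a \<le> cbar"
  shows "cpi pol C \<in> borel_measurable S"
    and "\<And>s. s \<in> space S \<Longrightarrow> 0 \<le> cpi pol C s \<and> cpi pol C s \<le> cbar"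
proof -
  define K where "K s = distr (pol s) (S \<Otimes>\<^sub>M A) (\<lambda>a. (s, a))" for s
  have K: "K \<in> S \<rightarrow>\<^sub>M prob_algebra (S \<Otimes>\<^sub>M A)"
    unfolding K_def by (rule measurable_distr_prob_space2[OF pk]) simp
  have "(\<lambda>s. \<integral>x. (\<lambda>(s, a). C s a) x \<partial>K s) \<in> borel_measurable S"
    using measurable_compose[OF measurable_prob_algebraD[OF K] integral_measurable_subprob_algebra[OF C_meas]] .
  moreover have "(\<integral>x. (\<lambda>(s, a). C s a) x \<partial>K s) = cpi pol C s" if s: "s \<in> space S" for s
  proof -
    have "sets (pol s) = sets A" using measurable_space[OF pk s] by (simp add: space_prob_algebra)
    then have m: "(\<lambda>a. (s, a)) \<in> pol s \<rightarrow>\<^sub>M S \<Otimes>\<^sub>M A"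
      using measurable_Pair1'[OF s, of A] measurable_cong_sets by blast
    show ?thesis unfolding K_def cpi_def
      by (subst integral_distr[OF m]) (auto simp: C_meas)
  qed
  ultimately show "cpi pol C \<in> borel_measurable S"
    using measurable_cong by (smt (verit, best))
  fix s assume s: "s \<in> space S"
  have "C s \<in> borel_measurable A"
    using measurable_compose[OF measurable_Pair1'[OF s] C_meas] by simp
  then show "0 \<le> cpi pol C s \<and> cpi pol C s \<le> cbar"
    unfolding cpi_def using integral_bounds_prob[OF measurable_space[OF pk s], of "C s" 0 cbar]
    C_nonneg[OF s] C_bound[OF s] by blast
qed


lemma Lpi_meas_bounds:
  assumes Pk: "Ppi pol P \<in> S \<rightarrow>\<^sub>M prob_algebra S"
    and cm: "cpi pol C \<in> borel_measurable S"
    and cb: "\<And>s. s \<in> space S \<Longrightarrow> 0 \<le> cpi pol C s \<and> cpi pol C s \<le> cbar"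
    and gamma: "0 < \<gamma>" "\<gamma> < 1"
  shows "Lpi S pol P C \<gamma> \<in> borel_measurable S"
    and "\<And>s. s \<in> space S \<Longrightarrow> 0 \<le> Lpi S pol P C \<gamma> s \<and> Lpi S pol P C \<gamma> s \<le> cbar / (1 - \<gamma>)"
proof -
  define e where "e t s = (\<integral>s'. cpi pol C s' \<partial>(state_dist (return S s) pol P t))" for t s
  have em: "e t \<in> borel_measurable S" for t
    unfolding e_def
    using measurable_compose[OF measurable_prob_algebraD[OF state_dist_kernel[OF Pk]] integral_measurable_subprob_algebra[OF cm]] .
  have eb: "0 \<le> e t s \<and> e t s \<le> cbar" if "s \<in> space S" for t s
    unfolding e_def
    using integral_bounds_prob[OF measurable_space[OF state_dist_kernel[OF Pk] that] cm, of 0 cbar] cb by blast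
  have L: "Lpi S pol P C \<gamma> s = (\<Sum>t. \<gamma> ^ t * e t s)" for s
    unfolding Lpi_def e_def ..
  show "Lpi S pol P C \<gamma> \<in> borel_measurable S"
    unfolding L[abs_def] using em by measurable
  fix s assume s: "s \<in> space S"
  have sg: "summable (\<lambda>t. \<gamma> ^ t * cbar)"
    using gamma by (intro summable_mult2 summable_geometric) auto
  have le: "\<gamma> ^ t * e t s \<le> \<gamma> ^ t * cbar" for t
    using eb[OF s, of t] gamma by (intro mult_left_mono) auto
  have nn: "0 \<le> \<gamma> ^ t * e t s" for t
    using eb[OF s, of t] gamma by simp
  have sm: "summable (\<lambda>t. \<gamma> ^ t * e t s)"
    by (rule summable_comparison_test'[OF sg]) (use le nn in auto)
  have "(\<Sum>t. \<gamma> ^ t * e t s) \<le> (\<Sum>t. \<gamma> ^ t * cbar)"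
    by (rule suminf_le[OF le sm sg])
  also have "\<dots> = cbar / (1 - \<gamma>)"
    using gamma by (simp add: suminf_mult2[symmetric] suminf_geometric)
  finally show "0 \<le> Lpi S pol P C \<gamma> s \<and> Lpi S pol P C \<gamma> s \<le> cbar / (1 - \<gamma>)"
    unfolding L using suminf_nonneg[OF sm nn] by simp
qed

lemma DeltaL_meas_bounds:
  assumes Pk: "Ppi pol P \<in> S \<rightarrow>\<^sub>M prob_algebra S"
    and Lm: "Lpi S pol P C \<gamma> \<in> borel_measurable S"
    and Lb: "\<And>s. s \<in> space S \<Longrightarrow> 0 \<le> Lpi S pol P C \<gamma> s \<and> Lpi S pol P C \<gamma> s \<le> B"
  shows "DeltaL S pol P C \<gamma> k lam \<in> borel_measurable S"
    and "\<And>s. s \<in> space S \<Longrightarrow> min 0 (1 - k * lam) * B + min 0 (k - 1) * B \<le> DeltaL S pol P C \<gamma> k lam s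
            \<and> DeltaL S pol P C \<gamma> k lam s \<le> max 0 (1 - k * lam) * B + max 0 (k - 1) * B"
proof -
  define L where "L = Lpi S pol P C \<gamma>"
  define E where "E s = (\<integral>s'. L s' \<partial>(Ppi pol P s))" for s
  have Em: "E \<in> borel_measurable S"
    unfolding E_def[abs_def] L_def
    using measurable_compose[OF measurable_prob_algebraD[OF Pk] integral_measurable_subprob_algebra[OF Lm]] .
  have D: "DeltaL S pol P C \<gamma> k lam s = (1 - k * lam) * E s + (k - 1) * L s" for s
    unfolding DeltaL_def E_def L_def by (simp add: algebra_simps)
  show "DeltaL S pol P C \<gamma> k lam \<in> borel_measurable S"
    unfolding D[abs_def] using Em Lm unfolding L_def by measurable
  fix s assume s: "s \<in> space S"
  have Eb: "0 \<le> E s \<and> E s \<le> B"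
    unfolding E_def L_def using integral_bounds_prob[OF measurable_space[OF Pk s] Lm, of 0 B] Lb by blast
  have Lb': "0 \<le> L s \<and> L s \<le> B" using Lb[OF s] L_def by simp
  have h: "min 0 c * B \<le> c * x \<and> c * x \<le> max 0 c * B" if "0 \<le> x" "x \<le> B" for c x :: real
  proof (cases "c \<ge> 0")
    case True then show ?thesis using that by (simp add: mult_left_mono)
  next
    case False then show ?thesis using that
      by (simp add: mult_left_mono_neg mult_nonpos_nonneg)
  qed
  show "min 0 (1 - k * lam) * B + min 0 (k - 1) * B \<le> DeltaL S pol P C \<gamma> k lam s
            \<and> DeltaL S pol P C \<gamma> k lam s \<le> max 0 (1 - k * lam) * B + max 0 (k - 1) * B"
    unfolding D using h[of "E s" "1 - k * lam"] h[of "L s" "k - 1"] Eb Lb' by auto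
qed


lemma upd_meas:
  "(\<lambda>(\<omega>, s). fun_upd \<omega> (Suc n) s) \<in> PiM {0..n} (\<lambda>_. S) \<Otimes>\<^sub>M S \<rightarrow>\<^sub>M PiM {0..Suc n} (\<lambda>_. S)"
proof -
  have "(\<lambda>x. \<lambda>i. (\<lambda>i x. if i = Suc n then snd x else fst x i) i x) \<in> PiM {0..n} (\<lambda>_. S) \<Otimes>\<^sub>M S \<rightarrow>\<^sub>M PiM {0..Suc n} (\<lambda>_. S)"
  proof (rule measurable_PiM_single')
    fix i assume i: "i \<in> {0..Suc n}"
    show "(\<lambda>x. if i = Suc n then snd x else fst x i) \<in> PiM {0..n} (\<lambda>_. S) \<Otimes>\<^sub>M S \<rightarrow>\<^sub>M S"
    proof (cases "i = Suc n")
      case True then show ?thesis by simp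
    next
      case False then have "i \<in> {0..n}" using i by auto
      then show ?thesis using False by simp
    qed
  next
    show "(\<lambda>x i. if i = Suc n then snd x else fst x i) \<in> space (PiM {0..n} (\<lambda>_. S) \<Otimes>\<^sub>M S) \<rightarrow> (\<Pi>\<^sub>E i\<in>{0..Suc n}. space S)"
      by (auto simp: space_pair_measure space_PiM PiE_def extensional_def Pi_def)
  qed
  moreover have eq: "(\<lambda>(\<omega>, s). fun_upd \<omega> (Suc n) s) = (\<lambda>x. \<lambda>i. (\<lambda>i x. if i = Suc n then snd x else fst x i) i x)"
    by (auto simp: fun_eq_iff)
  ultimately show ?thesis by (simp only: eq)
qed

lemma traj_kernel:
  assumes Pk: "Ppi pol P \<in> S \<rightarrow>\<^sub>M prob_algebra S"
  shows "(\<lambda>\<omega>. distr (Ppi pol P (\<omega> n)) (PiM {0..Suc n} (\<lambda>_. S)) (\<lambda>s. fun_upd \<omega> (Suc n) s))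
     \<in> PiM {0..n} (\<lambda>_. S) \<rightarrow>\<^sub>M prob_algebra (PiM {0..Suc n} (\<lambda>_. S))"
proof (rule measurable_distr_prob_space2)
  show "(\<lambda>\<omega>. Ppi pol P (\<omega> n)) \<in> PiM {0..n} (\<lambda>_. S) \<rightarrow>\<^sub>M prob_algebra S"
    by (rule measurable_compose[OF _ Pk]) simp
  show "(\<lambda>(\<omega>, s). fun_upd \<omega> (Suc n) s) \<in> PiM {0..n} (\<lambda>_. S) \<Otimes>\<^sub>M S \<rightarrow>\<^sub>M PiM {0..Suc n} (\<lambda>_. S)"
    by (rule upd_meas)
qed

lemma distr_const_prob:
  assumes "prob_space N" "c \<in> space X"
  shows "distr N X (\<lambda>_. c) = return X c"
proof (rule measure_eqI)
  fix A assume A: "A \<in> sets (distr N X (\<lambda>_. c))"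
  then have A': "A \<in> sets X" by simp
  show "emeasure (distr N X (\<lambda>_. c)) A = emeasure (return X c) A"
    using A' assms prob_space.emeasure_space_1[OF assms(1)]
    by (auto simp: emeasure_distr measurable_const)
qed simp

lemma traj_facts:
  assumes rho: "rho \<in> space (prob_algebra S)" and Pk: "Ppi pol P \<in> S \<rightarrow>\<^sub>M prob_algebra S"
  shows "traj S rho pol P n \<in> space (prob_algebra (PiM {0..n} (\<lambda>_. S)))
     \<and> (\<forall>t\<le>n. distr (traj S rho pol P n) S (\<lambda>\<omega>. \<omega> t) = state_dist rho pol P t)"
proof (induction n)
  case 0
  have rs: "sets rho = sets S" "prob_space rho" using rho by (auto simp: space_prob_algebra)
  have m: "(\<lambda>s. restrict (\<lambda>_. s) {0::nat}) \<in> rho \<rightarrow>\<^sub>M PiM {0} (\<lambda>_. S)"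
    using measurable_ident_sets[OF rs(1)] by (auto intro!: measurable_restrict)
  have "traj S rho pol P 0 \<in> space (prob_algebra (PiM {0..0} (\<lambda>_. S)))"
    using rs m by (auto simp: space_prob_algebra intro!: prob_space.prob_space_distr)
  moreover have "distr (traj S rho pol P 0) S (\<lambda>\<omega>. \<omega> 0) = rho"
  proof -
    have "distr (traj S rho pol P 0) S (\<lambda>\<omega>. \<omega> 0) = distr rho S ((\<lambda>\<omega>. \<omega> 0) \<circ> (\<lambda>s. restrict (\<lambda>_. s) {0::nat}))"
      by (simp only: traj.simps) (rule distr_distr[OF _ m], simp)
    also have "\<dots> = distr rho S (\<lambda>x. x)" by (simp add: comp_def)
    also have "\<dots> = rho" by (rule distr_id2) (simp add: rs)
    finally show ?thesis .
  qed
  ultimately show ?case by simp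
next
  case (Suc n)
  let ?K = "\<lambda>\<omega>. distr (Ppi pol P (\<omega> n)) (PiM {0..Suc n} (\<lambda>_. S)) (\<lambda>s. fun_upd \<omega> (Suc n) s)"
  have tn: "traj S rho pol P n \<in> space (prob_algebra (PiM {0..n} (\<lambda>_. S)))" using Suc.IH by blast
  have tr: "traj S rho pol P (Suc n) = traj S rho pol P n \<bind> ?K" by simp
  have K: "?K \<in> PiM {0..n} (\<lambda>_. S) \<rightarrow>\<^sub>M prob_algebra (PiM {0..Suc n} (\<lambda>_. S))"
    by (rule traj_kernel[OF Pk])
  have sp1: "traj S rho pol P (Suc n) \<in> space (prob_algebra (PiM {0..Suc n} (\<lambda>_. S)))"
    unfolding tr by (rule bind_in_prob_algebra[OF tn K])
  have tns: "sets (traj S rho pol P n) = sets (PiM {0..n} (\<lambda>_. S))" "prob_space (traj S rho pol P n)"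
    using tn by (auto simp: space_prob_algebra)
  have ne: "space (traj S rho pol P n) \<noteq> {}" using tns(2) prob_space.not_empty by blast
  have Kt: "?K \<in> traj S rho pol P n \<rightarrow>\<^sub>M subprob_algebra (PiM {0..Suc n} (\<lambda>_. S))"
    using measurable_prob_algebraD[OF K] measurable_cong_sets[OF tns(1) refl] by blast
  have spn: "space (traj S rho pol P n) = space (PiM {0..n} (\<lambda>_. S))"
    using sets_eq_imp_space_eq[OF tns(1)] .
  have marg: "distr (traj S rho pol P (Suc n)) S (\<lambda>\<omega>. \<omega> t) = state_dist rho pol P t" if t: "t \<le> Suc n" for t
  proof -
    have "distr (traj S rho pol P (Suc n)) S (\<lambda>\<omega>. \<omega> t) = traj S rho pol P n \<bind> (\<lambda>\<omega>. distr (?K \<omega>) S (\<lambda>\<omega>. \<omega> t))"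
      unfolding tr using t by (intro distr_bind[OF Kt ne]) simp
    also have "\<dots> = state_dist rho pol P t"
    proof (cases "t = Suc n")
      case True
      have "traj S rho pol P n \<bind> (\<lambda>\<omega>. distr (?K \<omega>) S (\<lambda>\<omega>. \<omega> t)) = traj S rho pol P n \<bind> (\<lambda>\<omega>. Ppi pol P (\<omega> n))"
      proof (rule bind_cong[OF refl])
        fix \<omega> assume w: "\<omega> \<in> space (traj S rho pol P n)"
        have pw: "Ppi pol P (\<omega> n) \<in> space (prob_algebra S)"
          using w spn by (intro measurable_space[OF Pk]) (auto simp: space_PiM)
        have m1: "(\<lambda>s. fun_upd \<omega> (Suc n) s) \<in> Ppi pol P (\<omega> n) \<rightarrow>\<^sub>M PiM {0..Suc n} (\<lambda>_. S)"
        proof -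
          have "(\<lambda>s. fun_upd \<omega> (Suc n) s) \<in> S \<rightarrow>\<^sub>M PiM {0..Suc n} (\<lambda>_. S)"
            using measurable_compose[OF measurable_Pair1'[of \<omega> "PiM {0..n} (\<lambda>_. S)" S] upd_meas] w spn by simp
          moreover have "sets (Ppi pol P (\<omega> n)) = sets S" using pw by (simp add: space_prob_algebra)
          ultimately show ?thesis using measurable_cong_sets by blast
        qed
        show "distr (?K \<omega>) S (\<lambda>\<omega>. \<omega> t) = Ppi pol P (\<omega> n)"
          using pw m1 True by (simp add: distr_distr comp_def distr_id2 space_prob_algebra)
      qed
      also have "\<dots> = distr (traj S rho pol P n) S (\<lambda>\<omega>. \<omega> n) \<bind> Ppi pol P"
        using measurable_prob_algebraD[OF Pk] ne tns(1)
        by (subst bind_distr) (auto cong: measurable_cong_sets)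
      also have "\<dots> = state_dist rho pol P t" using Suc.IH True by simp
      finally show ?thesis .
    next
      case False
      then have tn': "t \<le> n" using t by simp
      have "traj S rho pol P n \<bind> (\<lambda>\<omega>. distr (?K \<omega>) S (\<lambda>\<omega>. \<omega> t)) = traj S rho pol P n \<bind> (\<lambda>\<omega>. return S (\<omega> t))"
      proof (rule bind_cong[OF refl])
        fix \<omega> assume w: "\<omega> \<in> space (traj S rho pol P n)"
        have pw: "Ppi pol P (\<omega> n) \<in> space (prob_algebra S)"
          using w spn by (intro measurable_space[OF Pk]) (auto simp: space_PiM)
        have m1: "(\<lambda>s. fun_upd \<omega> (Suc n) s) \<in> Ppi pol P (\<omega> n) \<rightarrow>\<^sub>M PiM {0..Suc n} (\<lambda>_. S)"
        proof -
          have "(\<lambda>s. fun_upd \<omega> (Suc n) s) \<in> S \<rightarrow>\<^sub>M PiM {0..Suc n} (\<lambda>_. S)"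
            using measurable_compose[OF measurable_Pair1'[of \<omega> "PiM {0..n} (\<lambda>_. S)" S] upd_meas] w spn by simp
          moreover have "sets (Ppi pol P (\<omega> n)) = sets S" using pw by (simp add: space_prob_algebra)
          ultimately show ?thesis using measurable_cong_sets by blast
        qed
        have wt: "\<omega> t \<in> space S" using w spn tn' by (auto simp: space_PiM)
        show "distr (?K \<omega>) S (\<lambda>\<omega>. \<omega> t) = return S (\<omega> t)"
          using pw m1 False tn' wt by (simp add: distr_distr comp_def space_prob_algebra distr_const_prob)
      qed
      also have "\<dots> = distr (traj S rho pol P n) S (\<lambda>\<omega>. \<omega> t)"
        using ne tns(1) tn' by (subst bind_return_distr') (auto cong: measurable_cong_sets)
      also have "\<dots> = state_dist rho pol P t" using Suc.IH tn' by simp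
      finally show ?thesis .
    qed
    finally show ?thesis .
  qed
  show ?case using sp1 marg by blast
qed




lemma integrable_bounded_prob:
  fixes f :: "_ \<Rightarrow> real"
  assumes "prob_space N" "f \<in> borel_measurable N" "\<And>x. x \<in> space N \<Longrightarrow> \<bar>f x\<bar> \<le> c"
  shows "integrable N f"
  apply (rule finite_measure.integrable_const_bound[where B=c])
  using assms(1) prob_space_def apply blast
   apply (rule AE_I2) using assms(3) apply simp
  by (rule assms(2))

theorem theorem3:
  fixes S :: "'a measure" and A :: "'b measure"
    and pol :: "'a \<Rightarrow> 'b measure" and P :: "'a \<Rightarrow> 'b \<Rightarrow> 'a measure"
    and C :: "'a \<Rightarrow> 'b \<Rightarrow> real" and rho :: "'a measure"
    and \<gamma> cbar k lam \<alpha> :: real and M T :: nat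
  assumes pi_kernel: "pol \<in> S \<rightarrow>\<^sub>M prob_algebra A"
    and P_kernel: "(\<lambda>(s, a). P s a) \<in> S \<Otimes>\<^sub>M A \<rightarrow>\<^sub>M prob_algebra S"
    and C_meas: "(\<lambda>(s, a). C s a) \<in> borel_measurable (S \<Otimes>\<^sub>M A)"
    and C_nonneg: "\<And>s a. s \<in> space S \<Longrightarrow> a \<in> space A \<Longrightarrow> 0 \<le> C s a"
    and C_bound: "\<And>s a. s \<in> space S \<Longrightarrow> a \<in> space A \<Longrightarrow> C s a \<le> cbar"
    and rho: "rho \<in> space (prob_algebra S)"
    and gamma: "0 < \<gamma>" "\<gamma> < 1"
    and MT: "1 \<le> M" "1 \<le> T"
    and alpha: "\<alpha> > 0"
  shows "measure (trajs S rho pol P M T)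
           {\<omega> \<in> space (trajs S rho pol P M T).
              \<bar>(1 / (real M * real T)) * (\<Sum>m\<in>{1..M}. \<Sum>t\<in>{1..T}. DeltaL S pol P C \<gamma> k lam (\<omega> m t))
               - (1 / real T) * (\<Sum>t\<in>{1..T}. \<integral>s. DeltaL S pol P C \<gamma> k lam s \<partial>(state_dist rho pol P t))\<bar>
              \<ge> \<alpha>}
         \<le> 2 * exp (- (real M * \<alpha>\<^sup>2 * (1 - \<gamma>)\<^sup>2) / (((1 - k * lam)\<^sup>2 + (k - 1)\<^sup>2) * cbar\<^sup>2))"
proof -
  define \<Omega> where "\<Omega> = trajs S rho pol P M T"
  define I where "I = {1..M}"
  define \<Delta> where "\<Delta> = DeltaL S pol P C \<gamma> k lam"
  define B where "B = cbar / (1 - \<gamma>)"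
  define a where "a = 1 - k * lam"
  define b where "b = k - 1"
  define lo where "lo = min 0 a * B + min 0 b * B"
  define hi where "hi = max 0 a * B + max 0 b * B"
  define E where "E = (\<lambda>t. \<integral>s. \<Delta> s \<partial>(state_dist rho pol P t))"
  define Y where "Y = (\<lambda>x::nat \<Rightarrow> 'a. (1 / real T) * (\<Sum>t\<in>{1..T}. \<Delta> (x t)))"
  define X where "X = (\<lambda>m (\<omega>::nat \<Rightarrow> nat \<Rightarrow> 'a). Y (\<omega> m))"
  define tr where "tr = traj S rho pol P T"
  have Pk: "Ppi pol P \<in> S \<rightarrow>\<^sub>M prob_algebra S" by (rule Ppi_kernel[OF pi_kernel P_kernel])
  have cm: "cpi pol C \<in> borel_measurable S"
    by (rule cpi_meas_bounds(1)[OF pi_kernel C_meas]) (auto intro: C_nonneg C_bound)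
  have cb: "0 \<le> cpi pol C s \<and> cpi pol C s \<le> cbar" if "s \<in> space S" for s
    by (rule cpi_meas_bounds(2)[OF pi_kernel C_meas]) (auto intro: C_nonneg C_bound that)
  have Lm: "Lpi S pol P C \<gamma> \<in> borel_measurable S"
    by (rule Lpi_meas_bounds(1)[OF Pk cm cb gamma])
  have Lb: "0 \<le> Lpi S pol P C \<gamma> s \<and> Lpi S pol P C \<gamma> s \<le> cbar / (1 - \<gamma>)" if "s \<in> space S" for s
    by (rule Lpi_meas_bounds(2)[OF Pk cm cb gamma that])
  have \<Delta>m: "\<Delta> \<in> borel_measurable S" unfolding \<Delta>_def
    by (rule DeltaL_meas_bounds(1)[OF Pk Lm Lb])
  have \<Delta>b: "lo \<le> \<Delta> s \<and> \<Delta> s \<le> hi" if "s \<in> space S" for s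
    unfolding \<Delta>_def lo_def hi_def a_def b_def B_def
    by (rule DeltaL_meas_bounds(2)[OF Pk Lm Lb that])
  have rs: "sets rho = sets S" "prob_space rho" using rho by (auto simp: space_prob_algebra)
  obtain s0 where s0: "s0 \<in> space S"
    using prob_space.not_empty[OF rs(2)] sets_eq_imp_space_eq[OF rs(1)] by auto
  have ps0: "sets (pol s0) = sets A" "prob_space (pol s0)"
    using measurable_space[OF pi_kernel s0] by (auto simp: space_prob_algebra)
  obtain a0 where a0: "a0 \<in> space A"
    using prob_space.not_empty[OF ps0(2)] sets_eq_imp_space_eq[OF ps0(1)] by auto
  have cbar0: "0 \<le> cbar" using C_nonneg[OF s0 a0] C_bound[OF s0 a0] by linarith
  have B0: "0 \<le> B" unfolding B_def using cbar0 gamma by simp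
  have trf: "tr \<in> space (prob_algebra (PiM {0..T} (\<lambda>_. S)))"
     "\<And>t. t \<le> T \<Longrightarrow> distr tr S (\<lambda>\<omega>. \<omega> t) = state_dist rho pol P t"
    using traj_facts[OF rho Pk, of T] unfolding tr_def by auto
  have trs: "sets tr = sets (PiM {0..T} (\<lambda>_. S))" "prob_space tr"
    using trf(1) by (auto simp: space_prob_algebra)
  have trsp: "space tr = space (PiM {0..T} (\<lambda>_. S))" using sets_eq_imp_space_eq[OF trs(1)] .
  have \<Omega>_def': "\<Omega> = PiM I (\<lambda>_. tr)" unfolding \<Omega>_def trajs_def I_def tr_def ..
  have p\<Omega>: "prob_space \<Omega>" unfolding \<Omega>_def' by (rule prob_space_PiM) (use trs in auto)
  interpret O: prob_space \<Omega> by (rule p\<Omega>)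
  have comp_meas: "(\<lambda>x. x t) \<in> tr \<rightarrow>\<^sub>M S" if "t \<le> T" for t
  proof -
    have "(\<lambda>x. x t) \<in> PiM {0..T} (\<lambda>_. S) \<rightarrow>\<^sub>M S" using that by simp
    then show ?thesis using measurable_cong_sets[OF trs(1) refl] by blast
  qed
  have Ym: "Y \<in> borel_measurable tr"
    unfolding Y_def using comp_meas \<Delta>m by (auto intro!: borel_measurable_sum borel_measurable_times measurable_compose[OF _ \<Delta>m])
  have Yb: "lo \<le> Y x \<and> Y x \<le> hi" if "x \<in> space tr" for x
  proof -
    have xs: "x t \<in> space S" if "t \<in> {1..T}" for t using \<open>x \<in> space tr\<close> that trsp by (auto simp: space_PiM)
    have "real T * lo \<le> (\<Sum>t\<in>{1..T}. \<Delta> (x t))" using sum_mono[of "{1..T}" "\<lambda>_. lo" "\<lambda>t. \<Delta> (x t)"] \<Delta>b xs by auto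
    moreover have "(\<Sum>t\<in>{1..T}. \<Delta> (x t)) \<le> real T * hi" using sum_mono[of "{1..T}" "\<lambda>t. \<Delta> (x t)" "\<lambda>_. hi"] \<Delta>b xs by auto
    ultimately show ?thesis unfolding Y_def using MT by (auto simp: field_simps)
  qed
  have Yint: "\<bar>Y x\<bar> \<le> max \<bar>lo\<bar> \<bar>hi\<bar>" if "x \<in> space tr" for x using Yb[OF that] by auto
  have Ine: "I \<noteq> {}" unfolding I_def using MT by auto
  have finI: "finite I" unfolding I_def by simp
  have coord: "(\<lambda>\<omega>. \<omega> m) \<in> \<Omega> \<rightarrow>\<^sub>M tr" if "m \<in> I" for m
    unfolding \<Omega>_def' using that by simp
  have distr_coord: "distr \<Omega> tr (\<lambda>\<omega>. \<omega> m) = tr" if "m \<in> I" for m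
    unfolding \<Omega>_def' by (rule distr_PiM_component) (use trs that in auto)
  have deq: "distr \<Omega> (PiM I (\<lambda>_. tr)) (\<lambda>x. \<lambda>i\<in>I. x i) = PiM I (\<lambda>i. distr \<Omega> tr (\<lambda>\<omega>. \<omega> i))"
  proof -
    have "distr \<Omega> (PiM I (\<lambda>_. tr)) (\<lambda>x. \<lambda>i\<in>I. x i) = distr \<Omega> \<Omega> (\<lambda>x. x)"
      unfolding \<Omega>_def'
      by (rule distr_cong) (auto simp: space_PiM PiE_def extensional_restrict)
    also have "\<dots> = \<Omega>" by simp
    also have "\<dots> = PiM I (\<lambda>i. distr \<Omega> tr (\<lambda>\<omega>. \<omega> i))"
      unfolding \<Omega>_def' by (rule PiM_cong) (auto simp: distr_coord[unfolded \<Omega>_def'])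
    finally show ?thesis .
  qed
  have ind0: "O.indep_vars (\<lambda>_. tr) (\<lambda>m \<omega>. \<omega> m) I"
    using O.indep_vars_iff_distr_eq_PiM'[OF Ine, of "\<lambda>m \<omega>. \<omega> m" "\<lambda>_. tr"] coord deq by blast
  have ind: "O.indep_vars (\<lambda>_. borel) X I"
    unfolding X_def by (rule O.indep_vars_compose2[OF ind0]) (rule Ym)
  have intD: "integrable tr (\<lambda>x. \<Delta> (x t))" if "t \<le> T" for t
    by (rule integrable_bounded_prob[OF trs(2), where c="max \<bar>lo\<bar> \<bar>hi\<bar>"])
       (use measurable_compose[OF comp_meas[OF that] \<Delta>m] \<Delta>b measurable_space[OF comp_meas[OF that]] in \<open>force+\<close>)
  have EY: "(\<integral>x. Y x \<partial>tr) = (1 / real T) * (\<Sum>t\<in>{1..T}. E t)"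
  proof -
    have "(\<integral>x. Y x \<partial>tr) = (1 / real T) * (\<Sum>t\<in>{1..T}. \<integral>x. \<Delta> (x t) \<partial>tr)"
      unfolding Y_def by (simp add: integral_sum intD)
    also have "(\<Sum>t\<in>{1..T}. \<integral>x. \<Delta> (x t) \<partial>tr) = (\<Sum>t\<in>{1..T}. E t)"
    proof (rule sum.cong[OF refl])
      fix t assume t: "t \<in> {1..T}"
      have "E t = (\<integral>s. \<Delta> s \<partial>(distr tr S (\<lambda>\<omega>. \<omega> t)))" unfolding E_def using trf(2) t by simp
      also have "\<dots> = (\<integral>x. \<Delta> (x t) \<partial>tr)" using t by (intro integral_distr comp_meas \<Delta>m) auto
      finally show "(\<integral>x. \<Delta> (x t) \<partial>tr) = E t" by simp
    qed
    finally show ?thesis .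
  qed
  have EX: "O.expectation (X m) = (1 / real T) * (\<Sum>t\<in>{1..T}. E t)" if "m \<in> I" for m
  proof -
    have "O.expectation (X m) = (\<integral>x. Y x \<partial>(distr \<Omega> tr (\<lambda>\<omega>. \<omega> m)))"
      unfolding X_def by (rule integral_distr[symmetric, OF coord[OF that] Ym])
    then show ?thesis using distr_coord[OF that] EY by simp
  qed
  define \<mu> where "\<mu> = (\<Sum>i\<in>I. O.expectation (X i))"
  have \<mu>: "\<mu> = real M * ((1 / real T) * (\<Sum>t\<in>{1..T}. E t))"
    unfolding \<mu>_def using EX by (simp add: I_def)
  define D where "D = ((1 - k * lam)\<^sup>2 + (k - 1)\<^sup>2) * cbar\<^sup>2"
  have D0: "0 \<le> D" unfolding D_def by simp
  let ?ev = "{\<omega> \<in> space \<Omega>.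
              \<bar>(1 / (real M * real T)) * (\<Sum>m\<in>{1..M}. \<Sum>t\<in>{1..T}. \<Delta> (\<omega> m t))
               - (1 / real T) * (\<Sum>t\<in>{1..T}. E t)\<bar> \<ge> \<alpha>}"
  have goal: "measure \<Omega> ?ev \<le> 2 * exp (- (real M * \<alpha>\<^sup>2 * (1 - \<gamma>)\<^sup>2) / D)"
  proof (cases "D = 0")
    case True
    show ?thesis by (rule order_trans[OF O.prob_le_1]) (simp add: True)
  next
    case False
    then have Dp: "D > 0" using D0 by simp
    have cp: "cbar > 0" using Dp cbar0 unfolding D_def by (cases "cbar = 0") auto
    have abp: "a\<^sup>2 + b\<^sup>2 > 0" using Dp unfolding D_def a_def b_def
      by (metis add_nonneg_nonneg mult_zero_left order_less_le zero_le_power2)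
    define W where "W = sqrt (2 * (a\<^sup>2 + b\<^sup>2)) * B"
    have Bp: "B > 0" unfolding B_def using cp gamma by simp
    have Wp: "W > 0" unfolding W_def using abp Bp by simp
    have W2: "W\<^sup>2 = 2 * (a\<^sup>2 + b\<^sup>2) * B\<^sup>2" unfolding W_def
      using abp by (simp add: power_mult_distrib)
    have hl: "hi - lo = (\<bar>a\<bar> + \<bar>b\<bar>) * B"
      unfolding hi_def lo_def by (cases "a \<ge> 0"; cases "b \<ge> 0") (auto simp: algebra_simps)
    have sq: "(\<bar>a\<bar> + \<bar>b\<bar>)\<^sup>2 \<le> 2 * (a\<^sup>2 + b\<^sup>2)"
    proof -
      have "0 \<le> (\<bar>a\<bar> - \<bar>b\<bar>)\<^sup>2" by simp
      then show ?thesis by (simp add: power2_eq_square algebra_simps abs_mult_self_eq)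
    qed
    have "\<bar>a\<bar> + \<bar>b\<bar> \<le> sqrt (2 * (a\<^sup>2 + b\<^sup>2))" by (rule real_le_rsqrt[OF sq])
    then have hiW: "hi \<le> lo + W" using hl Bp unfolding W_def
      by (metis add.commute diff_le_eq mult_right_mono order_less_imp_le)
    interpret H: Hoeffding_ineq \<Omega> I X "\<lambda>_. lo" "\<lambda>_. lo + W" \<mu>
    proof unfold_locales
      show "finite I" by (rule finI)
      show "O.indep_vars (\<lambda>_. borel) X I" by (rule ind)
      show "\<mu> \<equiv> \<Sum>i\<in>I. O.expectation (X i)" unfolding \<mu>_def by simp
      fix i assume i: "i \<in> I"
      show "AE x in \<Omega>. X i x \<in> {lo..lo + W}"
      proof (rule AE_I2)
        fix x assume "x \<in> space \<Omega>"
        then have "x i \<in> space tr" using measurable_space[OF coord[OF i]] by blast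
        then show "X i x \<in> {lo..lo + W}" unfolding X_def using Yb hiW by force
      qed
    qed
    have pos: "(\<Sum>i\<in>I. (lo + W - lo)\<^sup>2) > 0" using Wp Ine finI by (intro sum_pos) auto
    have Hf: "O.prob {x \<in> space \<Omega>. \<bar>(\<Sum>i\<in>I. X i x) - \<mu>\<bar> \<ge> real M * \<alpha>}
         \<le> 2 * exp (-2 * (real M * \<alpha>)\<^sup>2 / (\<Sum>i\<in>I. (lo + W - lo)\<^sup>2))"
      using H.Hoeffding_ineq_abs_ge[OF _ pos] alpha by simp
    have evq: "?ev = {x \<in> space \<Omega>. \<bar>(\<Sum>i\<in>I. X i x) - \<mu>\<bar> \<ge> real M * \<alpha>}"
    proof -
      have "(\<bar>(1 / (real M * real T)) * (\<Sum>m\<in>{1..M}. \<Sum>t\<in>{1..T}. \<Delta> (\<omega> m t))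
               - (1 / real T) * (\<Sum>t\<in>{1..T}. E t)\<bar> \<ge> \<alpha>) \<longleftrightarrow> (\<bar>(\<Sum>i\<in>I. X i \<omega>) - \<mu>\<bar> \<ge> real M * \<alpha>)" for \<omega>
      proof -
        have Mp: "real M > 0" using MT by simp
        have "(\<Sum>i\<in>I. X i \<omega>) = (1 / real T) * (\<Sum>m\<in>{1..M}. \<Sum>t\<in>{1..T}. \<Delta> (\<omega> m t))"
          unfolding X_def Y_def I_def by (simp add: sum_distrib_left)
        then have "(1 / (real M * real T)) * (\<Sum>m\<in>{1..M}. \<Sum>t\<in>{1..T}. \<Delta> (\<omega> m t))
               - (1 / real T) * (\<Sum>t\<in>{1..T}. E t) = ((\<Sum>i\<in>I. X i \<omega>) - \<mu>) / real M"
          unfolding \<mu> using Mp by (simp add: field_simps)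
        then show ?thesis using Mp by (simp add: abs_divide le_divide_eq mult.commute)
      qed
      then show ?thesis by blast
    qed
    have "-2 * (real M * \<alpha>)\<^sup>2 / (\<Sum>i\<in>I. (lo + W - lo)\<^sup>2) = - (real M * \<alpha>\<^sup>2 * (1 - \<gamma>)\<^sup>2) / D"
    proof -
      have "(\<Sum>i\<in>I. (lo + W - lo)\<^sup>2) = real M * (2 * (a\<^sup>2 + b\<^sup>2) * B\<^sup>2)"
        using W2 by (simp add: I_def)
      moreover have "D = (a\<^sup>2 + b\<^sup>2) * cbar\<^sup>2" unfolding D_def a_def b_def by simp
      moreover have "-2 * (real M * \<alpha>)\<^sup>2 / (real M * (2 * (a\<^sup>2 + b\<^sup>2) * B\<^sup>2)) = - (real M * \<alpha>\<^sup>2) / ((a\<^sup>2 + b\<^sup>2) * B\<^sup>2)"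
      proof -
        have e1: "-2 * (real M * \<alpha>)\<^sup>2 = (real M * 2) * (- (real M * \<alpha>\<^sup>2))" by (simp add: power2_eq_square)
        have e2: "real M * (2 * (a\<^sup>2 + b\<^sup>2) * B\<^sup>2) = (real M * 2) * ((a\<^sup>2 + b\<^sup>2) * B\<^sup>2)" by simp
        show ?thesis unfolding e1 e2 by (rule nonzero_mult_divide_mult_cancel_left) (use MT in simp)
      qed
      moreover have "B\<^sup>2 = cbar\<^sup>2 / (1 - \<gamma>)\<^sup>2" by (simp add: B_def power_divide)
      moreover have "- (real M * \<alpha>\<^sup>2) / ((a\<^sup>2 + b\<^sup>2) * (cbar\<^sup>2 / (1 - \<gamma>)\<^sup>2)) = - (real M * \<alpha>\<^sup>2 * (1 - \<gamma>)\<^sup>2) / ((a\<^sup>2 + b\<^sup>2) * cbar\<^sup>2)"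
        using gamma by (simp add: field_simps)
      ultimately show ?thesis by simp
    qed
    then show ?thesis using Hf evq by simp
  qed
  then show ?thesis unfolding \<Omega>_def \<Delta>_def E_def D_def .
qed

end
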